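(* For every integer $n\ge 2$, \[ x\sum_{k=1}^{n}\binom{n}{k}\,{}_{H}w_{k}(x)=(x+1)\,{}_{H}w_{n}(x)-(x+1)\,w_{n-1}(x). \]
   Context: $\genfrac{\{}{\}}{0pt}{}{n}{k}$ denotes the Stirling numbers of the second kind. The geometric polynomials are $w_n(x)=\sum_{k=0}^{n}\genfrac{\{}{\}}{0pt}{}{n}{k}k!\,x^k$. With $H_k=\sum_{i=1}^k 1/i$, the harmonic geometric polynomials are ${}_{H}w_n(x)=\sum_{k=1}^{n}\genfrac{\{}{\}}{0pt}{}{n}{k}k!\,H_k\,x^k$. *)

theory Defs
  imports "HOL-Analysis.Analysis" "HOL-Combinatorics.Stirling"
begin

definition geom_poly :: "nat \<Rightarrow> real \<Rightarrow> real" where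
  "geom_poly n x = (\<Sum>k=0..n. real (Stirling n k) * fact k * x ^ k)"

definition harm_geom_poly :: "nat \<Rightarrow> real \<Rightarrow> real" where
  "harm_geom_poly n x = (\<Sum>k=1..n. real (Stirling n k) * fact k * harm k * x ^ k)"

end

theory Submission
  imports Defs
begin

lemma stirling_binom:
  "(\<Sum>k\<le>n. (n choose k) * Stirling k j) = Stirling (Suc n) (Suc j)"
proof (induction n arbitrary: j)
  case 0
  then show ?case by (cases j) auto
next
  case (Suc n)
  show ?case
  proof (cases j)
    case 0
    have "(\<Sum>k\<le>Suc n. (Suc n choose k) * Stirling k 0) = (\<Sum>k\<le>Suc n. if k = 0 then 1 else 0)"
      by (rule sum.cong) (auto simp: gr0_conv_Suc)
    also have "\<dots> = 1" by simp
    finally show ?thesis using 0 Stirling_1[of "Suc n"] by (simp del: Stirling.simps)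
  next
    case (Suc i)
    define T where "T = (\<lambda>j. \<Sum>k\<le>n. (n choose k) * Stirling k j)"
    have e1: "(\<Sum>k\<le>Suc n. (Suc n choose k) * Stirling k j)
      = Stirling 0 j + (\<Sum>k\<le>n. (n choose k) * Stirling (Suc k) j)
          + (\<Sum>k\<le>n. (n choose Suc k) * Stirling (Suc k) j)"
      by (simp only: sum.atMost_Suc_shift binomial_Suc_Suc add_mult_distrib sum.distrib
          binomial_n_0 mult_1 add.assoc)
    have e2: "T j = Stirling 0 j + (\<Sum>k\<le>n. (n choose Suc k) * Stirling (Suc k) j)"
    proof -
      have "T j = (\<Sum>k\<le>Suc n. (n choose k) * Stirling k j)"
        unfolding T_def by simp
      also have "\<dots> = Stirling 0 j + (\<Sum>k\<le>n. (n choose Suc k) * Stirling (Suc k) j)"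
        by (subst sum.atMost_Suc_shift) simp
      finally show ?thesis .
    qed
    have e3: "(\<Sum>k\<le>n. (n choose k) * Stirling (Suc k) j) = Suc i * T (Suc i) + T i"
      unfolding T_def using Suc by (simp add: sum.distrib sum_distrib_left algebra_simps)
    have "(\<Sum>k\<le>Suc n. (Suc n choose k) * Stirling k j) = T j + Suc i * T (Suc i) + T i"
      using e1 e2 e3 by simp
    also have "\<dots> = Suc j * T j + T i" using Suc by simp
    also have "\<dots> = Stirling (Suc (Suc n)) (Suc j)"
      using Suc.IH unfolding T_def using Suc by simp
    finally show ?thesis .
  qed
qed

lemma sum_ext_stirling:
  fixes f :: "nat \<Rightarrow> real"
  assumes "n \<le> N"
  shows "(\<Sum>j\<le>N. real (Stirling n j) * f j) = (\<Sum>j\<le>n. real (Stirling n j) * f j)"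
  by (rule sum.mono_neutral_right) (use assms in auto)

theorem proposition1:
  fixes n :: nat and x :: real
  assumes "n \<ge> 2"
  shows "x * (\<Sum>k=1..n. real (n choose k) * harm_geom_poly k x)
         = (x + 1) * harm_geom_poly n x - (x + 1) * geom_poly (n - 1) x"
proof -
  have hw: "harm_geom_poly m x = (\<Sum>j\<le>m. real (Stirling m j) * fact j * harm j * x ^ j)" for m
  proof -
    have "harm_geom_poly m x = (\<Sum>j\<in>insert 0 {1..m}. real (Stirling m j) * fact j * harm j * x ^ j)"
      unfolding harm_geom_poly_def by (simp add: harm_def)
    also have "insert 0 {1..m} = {..m}" by auto
    finally show ?thesis .
  qed
  have gw: "geom_poly m x = (\<Sum>j\<le>m. real (Stirling m j) * fact j * x ^ j)" for m
    unfolding geom_poly_def by (simp add: atLeast0AtMost)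
  define g where "g = (\<lambda>j. fact j * harm j * x ^ j)"
  have "(\<Sum>k=1..n. real (n choose k) * harm_geom_poly k x)
      = (\<Sum>k\<le>n. real (n choose k) * harm_geom_poly k x)"
  proof -
    have "(\<Sum>k\<le>n. real (n choose k) * harm_geom_poly k x)
        = (\<Sum>k\<in>insert 0 {1..n}. real (n choose k) * harm_geom_poly k x)"
      by (rule sum.cong) auto
    also have "\<dots> = (\<Sum>k=1..n. real (n choose k) * harm_geom_poly k x)"
      by (simp add: harm_geom_poly_def)
    finally show ?thesis by simp
  qed
  also have "\<dots> = (\<Sum>k\<le>n. \<Sum>j\<le>n. real (n choose k) * (real (Stirling k j) * g j))"
  proof (rule sum.cong[OF refl])
    fix k assume "k \<in> {..n}"
    then have "harm_geom_poly k x = (\<Sum>j\<le>n. real (Stirling k j) * g j)"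
      unfolding hw g_def by (subst sum_ext_stirling) (auto simp: mult.assoc)
    then show "real (n choose k) * harm_geom_poly k x = (\<Sum>j\<le>n. real (n choose k) * (real (Stirling k j) * g j))"
      by (simp add: sum_distrib_left)
  qed
  also have "\<dots> = (\<Sum>j\<le>n. real (Stirling (Suc n) (Suc j)) * g j)"
  proof -
    have "(\<Sum>k\<le>n. \<Sum>j\<le>n. real (n choose k) * (real (Stirling k j) * g j))
       = (\<Sum>j\<le>n. (\<Sum>k\<le>n. real (n choose k) * real (Stirling k j)) * g j)"
      by (subst sum.swap) (simp add: sum_distrib_right mult.assoc)
    also have "\<dots> = (\<Sum>j\<le>n. real (Stirling (Suc n) (Suc j)) * g j)"
      by (simp only: of_nat_mult[symmetric] of_nat_sum[symmetric] stirling_binom)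
    finally show ?thesis .
  qed
  finally have L: "(\<Sum>k=1..n. real (n choose k) * harm_geom_poly k x)
     = (\<Sum>j\<le>n. real (Stirling n j) * g j) + (\<Sum>j\<le>n. real (Suc j) * real (Stirling n (Suc j)) * g j)"
    by (simp add: sum.distrib algebra_simps)
  have A: "(\<Sum>j\<le>n. real (Stirling n j) * g j) = harm_geom_poly n x"
    unfolding hw g_def by (simp add: mult.assoc)
  define G where "G = (\<lambda>m. real (Stirling n m) * fact m * harm m * x ^ m)"
  define C where "C = (\<lambda>j. real (Stirling n (Suc j)) * fact j * x ^ Suc j)"
  have B0': "x * (real (Suc j) * real (Stirling n (Suc j)) * g j) = G (Suc j) - C j" for j
  proof -
    have f: "fact (Suc j) * inverse (real (Suc j)) = (fact j :: real)"
      by (simp add: fact_Suc field_simps)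
    have "G (Suc j) = real (Stirling n (Suc j)) * (fact (Suc j) * harm j) * x ^ Suc j
       + real (Stirling n (Suc j)) * (fact (Suc j) * inverse (real (Suc j))) * x ^ Suc j"
      unfolding G_def harm_Suc by (simp add: algebra_simps)
    also have "\<dots> = real (Stirling n (Suc j)) * (fact (Suc j) * harm j) * x ^ Suc j + C j"
      unfolding f C_def by simp
    finally show ?thesis unfolding g_def by (simp add: fact_Suc algebra_simps)
  qed
  have G1: "(\<Sum>j\<le>n. G (Suc j)) = harm_geom_poly n x"
  proof -
    have "(\<Sum>j\<le>Suc n. G j) = G 0 + (\<Sum>j\<le>n. G (Suc j))" by (rule sum.atMost_Suc_shift)
    moreover have "(\<Sum>j\<le>Suc n. G j) = (\<Sum>j\<le>n. G j) + G (Suc n)" by (rule sum.atMost_Suc)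
    moreover have "G 0 = 0" "G (Suc n) = 0" by (simp_all add: G_def harm_def)
    ultimately have "(\<Sum>j\<le>n. G (Suc j)) = (\<Sum>j\<le>n. G j)" by simp
    then show ?thesis unfolding hw G_def .
  qed
  obtain p where p: "n = Suc p" and p1: "p \<ge> 1" using assms by (cases n) auto
  have C1: "(\<Sum>j\<le>n. C j) = (x + 1) * geom_poly p x"
  proof -
    define W where "W = (\<lambda>m. real (Stirling p m) * fact m * x ^ m)"
    have "C j = W (Suc j) + x * W j" for j
      unfolding C_def W_def p by (simp add: field_simps)
    then have "(\<Sum>j\<le>n. C j) = (\<Sum>j\<le>n. W (Suc j)) + x * (\<Sum>j\<le>n. W j)"
      by (simp add: sum.distrib sum_distrib_left)
    also have "(\<Sum>j\<le>n. W (Suc j)) = (\<Sum>j\<le>Suc n. W j)"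
    proof -
      have "W 0 = 0" using p1 by (cases p) (simp_all add: W_def)
      then show ?thesis by (subst sum.atMost_Suc_shift) simp
    qed
    also have "(\<Sum>j\<le>Suc n. W j) = geom_poly p x"
      unfolding gw W_def using p by (subst sum_ext_stirling[where f = "\<lambda>m. fact m * x ^ m", simplified mult.assoc[symmetric]]) auto
    also have "(\<Sum>j\<le>n. W j) = geom_poly p x"
      unfolding gw W_def using p by (subst sum_ext_stirling[where f = "\<lambda>m. fact m * x ^ m", simplified mult.assoc[symmetric]]) auto
    finally show ?thesis by (simp add: algebra_simps)
  qed
  have "x * (\<Sum>k=1..n. real (n choose k) * harm_geom_poly k x)
      = x * harm_geom_poly n x + (\<Sum>j\<le>n. x * (real (Suc j) * real (Stirling n (Suc j)) * g j))"
    unfolding L A by (simp add: distrib_left sum_distrib_left)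
  also have "\<dots> = x * harm_geom_poly n x + harm_geom_poly n x - (x + 1) * geom_poly p x"
    unfolding B0' sum_subtractf G1 C1 by simp
  finally show ?thesis using p by (simp add: algebra_simps)
qed

end
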